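(* Let $\Omega\subset\mathbb{Z}_2^n\setminus\{\mathbf 0\}$ be nonempty and such that the Hamming weights $s(\beta)$, $\beta\in\Omega$, are either all even or all odd. Let $k=\min_{\beta\in\Omega}s(\beta)$ and let $H_\Omega(t)$ be the transition matrix of $\mathrm{NEPS}(P_3,\ldots,P_3;\Omega)$. Then $H_\Omega\!\left(\frac{2\pi}{(\sqrt2)^k}\right)=I$; that is, $\mathrm{NEPS}(P_3,\ldots,P_3;\Omega)$ is periodic at time $\frac{2\pi}{(\sqrt2)^k}$.
   Context: $P_3$ is the path on three vertices. For graphs $G_1,\dots,G_n$ and $\Omega\subset\mathbb{Z}_2^n\setminus\{\mathbf 0\}$, $\mathrm{NEPS}(G_1,\dots,G_n;\Omega)$ is the graph on $V(G_1)\times\cdots\times V(G_n)$ with adjacency matrix $\sum_{\beta\in\Omega}A_1^{\beta_1}\otimes\cdots\otimes A_n^{\beta_n}$, $A_i$ the adjacency matrix of $G_i$ (equivalently, $(x_i)$ and $(y_i)$ are adjacent iff for some $\beta\in\Omega$, $x_i=y_i$ when $\beta_i=0$ and $x_iy_i\in E(G_i)$ when $\beta_i=1$). The Hamming weight $s(\beta)$ is the number of entries of $\beta$ equal to $1$. The transition matrix of a graph with adjacency matrix $A$ is $H(t)=\exp(-itA)$. A graph is periodic at time $\tau\neq0$ if $H(\tau)=\gamma I$ for some $\gamma$ with $|\gamma|=1$. *)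

theory Defs
  imports Complex_Main "Jordan_Normal_Form.Matrix"
begin

definition P3_adj :: "nat \<Rightarrow> nat \<Rightarrow> complex" where
  "P3_adj a b = (if (a = 0 \<and> b = 1) \<or> (a = 1 \<and> b = 0) \<or> (a = 1 \<and> b = 2) \<or> (a = 2 \<and> b = 1)
                  then 1 else 0)"

text \<open>A vertex of the product V(P_3)^n is encoded as a number x < 3^n; its i-th
  coordinate is the i-th base-3 digit.\<close>
definition digit3 :: "nat \<Rightarrow> nat \<Rightarrow> nat" where
  "digit3 x i = (x div 3 ^ i) mod 3"

text \<open>An element beta of Z_2^n is encoded by its support, a subset of {0..<n};
  the Hamming weight s(beta) is then card beta.\<close>
definition NEPS_P3_adj :: "nat \<Rightarrow> nat set set \<Rightarrow> complex mat" where
  "NEPS_P3_adj n \<Omega> = mat (3 ^ n) (3 ^ n) (\<lambda>(x, y).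
      \<Sum>\<beta>\<in>\<Omega>. \<Prod>i<n. (if i \<in> \<beta> then P3_adj (digit3 x i) (digit3 y i)
                          else (if digit3 x i = digit3 y i then 1 else 0)))"

definition transition_matrix :: "complex mat \<Rightarrow> real \<Rightarrow> complex mat" where
  "transition_matrix A t = mat (dim_row A) (dim_col A) (\<lambda>(i, j).
      \<Sum>m. ((- \<i> * complex_of_real t) ^ m / of_nat (fact m)) * (A ^\<^sub>m m) $$ (i, j))"

end

theory Submission
  imports Defs
begin

lemma digit3_0: "d < 3 \<Longrightarrow> digit3 (3 * q + d) 0 = d"
  by (simp add: digit3_def)

lemma digit3_Suc: "d < 3 \<Longrightarrow> digit3 (3 * q + d) (Suc i) = digit3 q i"
proof -
  assume "d < 3"
  have "(3 * q + d) div 3 ^ Suc i = ((3 * q + d) div 3) div 3 ^ i"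
    by (simp add: div_mult2_eq)
  also have "(3 * q + d) div 3 = q" using \<open>d < 3\<close> by simp
  finally show ?thesis by (simp add: digit3_def)
qed

lemma sum3: "(\<Sum>d<(3::nat). h d) = h 0 + h 1 + h 2"
proof -
  have "{..<(3::nat)} = {0,1,2}" by auto
  then show ?thesis by (simp add: add.assoc)
qed

lemma sum_split3: fixes g :: "nat \<Rightarrow> 'a::comm_monoid_add" shows "(\<Sum>x<3 * N. g x) = (\<Sum>q<N. \<Sum>d<(3::nat). g (3 * q + d))"
proof -
  have "(\<Sum>x<3 * N. g x) = (\<Sum>q<N. sum g {q * 3..<q * 3 + 3})"
    using sum.nat_group[where g=g and n=N and k=3] by (simp add: mult.commute)
  also have "\<dots> = (\<Sum>q<N. \<Sum>d<(3::nat). g (3 * q + d))"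
  proof (rule sum.cong[OF refl])
    fix q :: nat
    have "{q * 3..<q * 3 + 3} = {3*q, 3*q+1, 3*q+2}" by auto
    then show "sum g {q * 3..<q * 3 + 3} = (\<Sum>d<(3::nat). g (3 * q + d))"
      by (simp add: sum3 add.assoc)
  qed
  finally show ?thesis .
qed

lemma sum_prod_digits:
  "(\<Sum>x<3^n. \<Prod>i<n. f i (digit3 x i)) = (\<Prod>i<n. \<Sum>d<(3::nat). (f i d :: 'a::comm_semiring_1))"
proof (induction n arbitrary: f)
  case 0
  then show ?case by simp
next
  case (Suc n)
  have "(\<Sum>x<3^Suc n. \<Prod>i<Suc n. f i (digit3 x i))
      = (\<Sum>q<3^n. \<Sum>d<(3::nat). \<Prod>i<Suc n. f i (digit3 (3*q+d) i))"
    using sum_split3[where N="3^n"] by simp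
  also have "\<dots> = (\<Sum>q<3^n. \<Sum>d<(3::nat). f 0 d * (\<Prod>i<n. f (Suc i) (digit3 q i)))"
    by (intro sum.cong refl, simp only: prod.lessThan_Suc_shift) (simp add: digit3_0 digit3_Suc)
  also have "\<dots> = (\<Sum>d<(3::nat). f 0 d) * (\<Sum>q<3^n. \<Prod>i<n. f (Suc i) (digit3 q i))"
    by (simp add: sum_distrib_left sum_distrib_right sum.swap[of _ "{..<3^n}"] mult.commute)
  also have "\<dots> = (\<Sum>d<(3::nat). f 0 d) * (\<Prod>i<n. \<Sum>d<(3::nat). f (Suc i) d)"
    using Suc.IH[of "\<lambda>i. f (Suc i)"] by simp
  also have "\<dots> = (\<Prod>i<Suc n. \<Sum>d<(3::nat). f i d)"
    by (simp only: prod.lessThan_Suc_shift)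
  finally show ?case .
qed

lemma digit3_lt: "digit3 x i < 3" by (simp add: digit3_def)

lemma digits_eq:
  "x < 3^n \<Longrightarrow> y < 3^n \<Longrightarrow> (\<forall>i<n. digit3 x i = digit3 y i) \<Longrightarrow> x = y"
proof (induction n arbitrary: x y)
  case 0
  then show ?case by simp
next
  case (Suc n)
  have x: "x = 3 * (x div 3) + x mod 3" and y: "y = 3 * (y div 3) + y mod 3" by simp_all
  have "digit3 x 0 = digit3 y 0" using Suc.prems by auto
  hence m: "x mod 3 = y mod 3" by (simp add: digit3_def)
  have "\<forall>i<n. digit3 (x div 3) i = digit3 (y div 3) i"
  proof (intro allI impI)
    fix i assume "i < n"
    hence "digit3 x (Suc i) = digit3 y (Suc i)" using Suc.prems by auto
    then show "digit3 (x div 3) i = digit3 (y div 3) i"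
      using digit3_Suc[of "x mod 3" "x div 3" i] digit3_Suc[of "y mod 3" "y div 3" i] x y by simp
  qed
  moreover have "x div 3 < 3^n" "y div 3 < 3^n" using Suc.prems by auto
  ultimately have "x div 3 = y div 3" using Suc.IH by blast
  then show ?case using x y m by metis
qed
definition sg :: "nat \<Rightarrow> int" where
  "sg j = (if j = 1 then 1 else if j = 2 then -1 else 0)"
definition r2 :: complex where "r2 = complex_of_real (sqrt 2)"
definition mu :: "nat \<Rightarrow> complex" where "mu j = of_int (sg j) * r2"
definition vv :: "nat \<Rightarrow> nat \<Rightarrow> complex" where
  "vv j a = (if j = 0 then (if a = 0 then 1 else if a = 1 then 0 else -1)
             else if a = 1 then of_int (sg j) * r2 else 1)"
definition cc :: "nat \<Rightarrow> complex" where "cc j = (if j = 0 then 2 else 4)"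

lemma r2sq: "r2 * r2 = 2"
  unfolding r2_def by (simp flip: of_real_mult)

lemma cc_nz: "cc j \<noteq> 0" by (simp add: cc_def)

lemma lt3: "(a::nat) < 3 \<Longrightarrow> a = 0 \<or> a = 1 \<or> a = 2" by auto

lemma L1: "a < 3 \<Longrightarrow> b < 3 \<Longrightarrow> P3_adj a b = (\<Sum>j<3. mu j * vv j a * vv j b / cc j)"
  apply (drule lt3, drule lt3)
  apply (auto simp: sum3 P3_adj_def mu_def vv_def cc_def sg_def field_simps r2sq)
  done

lemma L2: "a < 3 \<Longrightarrow> b < 3 \<Longrightarrow> (if a = b then 1 else 0) = (\<Sum>j<3. vv j a * vv j b / cc j)"
  apply (drule lt3, drule lt3)
  apply (auto simp: sum3 vv_def cc_def sg_def field_simps r2sq)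
  done

lemma L3: "j < 3 \<Longrightarrow> l < 3 \<Longrightarrow> (\<Sum>d<3. vv j d * vv l d) = (if j = l then cc j else 0)"
  apply (drule lt3, drule lt3)
  apply (auto simp: sum3 vv_def cc_def sg_def field_simps r2sq)
  done
definition W :: "nat \<Rightarrow> nat \<Rightarrow> nat \<Rightarrow> complex" where
  "W n e x = (\<Prod>i<n. vv (digit3 e i) (digit3 x i))"
definition C :: "nat \<Rightarrow> nat \<Rightarrow> complex" where
  "C n e = (\<Prod>i<n. cc (digit3 e i))"
definition Lam :: "nat \<Rightarrow> nat set set \<Rightarrow> nat \<Rightarrow> complex" where
  "Lam n \<Omega> e = (\<Sum>\<beta>\<in>\<Omega>. \<Prod>i<n. (if i \<in> \<beta> then mu (digit3 e i) else 1))"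
definition S :: "nat \<Rightarrow> nat set set \<Rightarrow> nat \<Rightarrow> nat \<Rightarrow> nat \<Rightarrow> complex" where
  "S n \<Omega> m x y = (\<Sum>e<3^n. Lam n \<Omega> e ^ m * W n e x * W n e y / C n e)"

lemma C_nz: "C n e \<noteq> 0" by (simp add: C_def cc_nz)

lemma entryM:
  assumes "x < 3^n" "y < 3^n"
  shows "NEPS_P3_adj n \<Omega> $$ (x, y) = S n \<Omega> 1 x y"
proof -
  have "NEPS_P3_adj n \<Omega> $$ (x, y) = (\<Sum>\<beta>\<in>\<Omega>. \<Prod>i<n. (if i \<in> \<beta> then P3_adj (digit3 x i) (digit3 y i)
                          else (if digit3 x i = digit3 y i then 1 else 0)))"
    using assms by (simp add: NEPS_P3_adj_def)
  also have "\<dots> = (\<Sum>\<beta>\<in>\<Omega>. \<Prod>i<n. \<Sum>j<3. (if i \<in> \<beta> then mu j else 1) * vv j (digit3 x i) * vv j (digit3 y i) / cc j)"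
    by (intro sum.cong prod.cong refl) (auto simp: L1 L2 digit3_lt)
  also have "\<dots> = (\<Sum>\<beta>\<in>\<Omega>. \<Sum>e<3^n. \<Prod>i<n. (if i \<in> \<beta> then mu (digit3 e i) else 1) * vv (digit3 e i) (digit3 x i) * vv (digit3 e i) (digit3 y i) / cc (digit3 e i))"
    by (subst sum_prod_digits) simp
  also have "\<dots> = (\<Sum>e<3^n. \<Sum>\<beta>\<in>\<Omega>. (\<Prod>i<n. (if i \<in> \<beta> then mu (digit3 e i) else 1)) * W n e x * W n e y / C n e)"
    by (subst sum.swap) (simp add: W_def C_def prod.distrib prod_dividef)
  also have "\<dots> = S n \<Omega> 1 x y"
    by (simp add: S_def Lam_def sum_distrib_right sum_divide_distrib)
  finally show ?thesis .
qed

lemma delta_digits: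
  assumes "x < 3^n" "y < 3^n"
  shows "(if x = y then (1::complex) else 0) = (\<Prod>i<n. if digit3 x i = digit3 y i then 1 else 0)"
proof (cases "x = y")
  case True then show ?thesis by simp
next
  case False
  then obtain i where "i < n" "digit3 x i \<noteq> digit3 y i" using digits_eq[OF assms] by blast
  then show ?thesis using False by (auto intro!: prod_zero)
qed

lemma entryI:
  assumes "x < 3^n" "y < 3^n"
  shows "(if x = y then 1 else 0) = S n \<Omega> 0 x y"
proof -
  have "(if x = y then (1::complex) else 0) = (\<Prod>i<n. if digit3 x i = digit3 y i then 1 else 0)"
    by (rule delta_digits[OF assms])
  also have "\<dots> = (\<Prod>i<n. \<Sum>j<3. vv j (digit3 x i) * vv j (digit3 y i) / cc j)"
    by (intro prod.cong refl) (auto simp: L2 digit3_lt)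
  also have "\<dots> = (\<Sum>e<3^n. \<Prod>i<n. vv (digit3 e i) (digit3 x i) * vv (digit3 e i) (digit3 y i) / cc (digit3 e i))"
    by (subst sum_prod_digits) simp
  also have "\<dots> = S n \<Omega> 0 x y"
    by (simp add: S_def W_def C_def prod.distrib prod_dividef)
  finally show ?thesis .
qed

lemma orth:
  assumes "e < 3^n" "f < 3^n"
  shows "(\<Sum>z<3^n. W n e z * W n f z) = (if e = f then C n e else 0)"
proof -
  have "(\<Sum>z<3^n. W n e z * W n f z) = (\<Sum>z<3^n. \<Prod>i<n. vv (digit3 e i) (digit3 z i) * vv (digit3 f i) (digit3 z i))"
    by (simp add: W_def prod.distrib)
  also have "\<dots> = (\<Prod>i<n. \<Sum>d<3. vv (digit3 e i) d * vv (digit3 f i) d)"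
    by (rule sum_prod_digits)
  also have "\<dots> = (\<Prod>i<n. if digit3 e i = digit3 f i then cc (digit3 e i) else 0)"
    by (intro prod.cong refl) (simp add: L3 digit3_lt)
  also have "\<dots> = (if e = f then C n e else 0)"
  proof (cases "e = f")
    case True then show ?thesis by (simp add: C_def)
  next
    case False
    then obtain i where "i < n" "digit3 e i \<noteq> digit3 f i" using digits_eq[OF assms] by blast
    then show ?thesis using False by (auto intro!: prod_zero)
  qed
  finally show ?thesis .
qed

lemma bilin:
  fixes a b :: "nat \<Rightarrow> complex"
  shows "(\<Sum>z\<in>Z. (\<Sum>e\<in>E. a e * w e z) * (\<Sum>f\<in>E. b f * w f z))
       = (\<Sum>e\<in>E. \<Sum>f\<in>E. a e * b f * (\<Sum>z\<in>Z. w e z * w f z))"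
proof -
  have "(\<Sum>z\<in>Z. (\<Sum>e\<in>E. a e * w e z) * (\<Sum>f\<in>E. b f * w f z))
      = (\<Sum>z\<in>Z. \<Sum>e\<in>E. \<Sum>f\<in>E. a e * b f * (w e z * w f z))"
    by (simp add: sum_product mult_ac)
  also have "\<dots> = (\<Sum>e\<in>E. \<Sum>z\<in>Z. \<Sum>f\<in>E. a e * b f * (w e z * w f z))"
    by (rule sum.swap)
  also have "\<dots> = (\<Sum>e\<in>E. \<Sum>f\<in>E. \<Sum>z\<in>Z. a e * b f * (w e z * w f z))"
    by (intro sum.cong refl sum.swap)
  also have "\<dots> = (\<Sum>e\<in>E. \<Sum>f\<in>E. a e * b f * (\<Sum>z\<in>Z. w e z * w f z))"
    by (simp add: sum_distrib_left)
  finally show ?thesis .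
qed

lemma dimM: "dim_row (NEPS_P3_adj n \<Omega>) = 3^n" "dim_col (NEPS_P3_adj n \<Omega>) = 3^n"
  by (simp_all add: NEPS_P3_adj_def)

lemma powM:
  assumes "x < 3^n" "y < 3^n"
  shows "(NEPS_P3_adj n \<Omega> ^\<^sub>m m) $$ (x, y) = S n \<Omega> m x y"
  using assms
proof (induction m arbitrary: x y)
  case 0
  then show ?case using entryI[of x n y \<Omega>] by (simp add: dimM)
next
  case (Suc m)
  let ?M = "NEPS_P3_adj n \<Omega>"
  have "(?M ^\<^sub>m Suc m) $$ (x, y) = (\<Sum>z<3^n. (?M ^\<^sub>m m) $$ (x, z) * ?M $$ (z, y))"
    using Suc.prems by (simp add: dimM scalar_prod_def atLeast0LessThan)
  also have "\<dots> = (\<Sum>z<3^n. S n \<Omega> m x z * S n \<Omega> 1 z y)"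
    using Suc.prems by (intro sum.cong refl) (simp add: Suc.IH entryM)
  also have "\<dots> = (\<Sum>z<3^n. (\<Sum>e<3^n. (Lam n \<Omega> e ^ m * W n e x / C n e) * W n e z)
                     * (\<Sum>f<3^n. (Lam n \<Omega> f * W n f y / C n f) * W n f z))"
    by (simp add: S_def mult_ac)
  also have "\<dots> = (\<Sum>e<3^n. \<Sum>f<3^n. (Lam n \<Omega> e ^ m * W n e x / C n e) * (Lam n \<Omega> f * W n f y / C n f)
                     * (\<Sum>z<3^n. W n e z * W n f z))"
    by (rule bilin)
  also have "\<dots> = (\<Sum>e<3^n. \<Sum>f<3^n. if e = f then (Lam n \<Omega> e ^ m * W n e x / C n e) * (Lam n \<Omega> e * W n e y / C n e) * C n e else 0)"
    by (intro sum.cong refl) (simp add: orth)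
  also have "\<dots> = (\<Sum>e<3^n. (Lam n \<Omega> e ^ m * W n e x / C n e) * (Lam n \<Omega> e * W n e y / C n e) * C n e)"
    by (simp add: sum.delta)
  also have "\<dots> = S n \<Omega> (Suc m) x y"
    unfolding S_def by (intro sum.cong refl) (simp add: C_nz field_simps)
  finally show ?case .
qed
lemma sqrt2_pow: "sqrt 2 ^ (k + 2 * j) = sqrt 2 ^ k * 2 ^ j"
  by (simp add: power_add power_mult)

lemma Lam_form:
  assumes "\<Omega> \<subseteq> Pow {0..<n}"
  shows "Lam n \<Omega> e = (\<Sum>\<beta>\<in>\<Omega>. of_int (\<Prod>i\<in>\<beta>. sg (digit3 e i)) * r2 ^ card \<beta>)"
proof -
  have "\<And>\<beta>. \<beta> \<in> \<Omega> \<Longrightarrow> (\<Prod>i<n. (if i \<in> \<beta> then mu (digit3 e i) else 1))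
          = of_int (\<Prod>i\<in>\<beta>. sg (digit3 e i)) * r2 ^ card \<beta>"
  proof -
    fix \<beta> assume b: "\<beta> \<in> \<Omega>"
    then have "\<beta> \<subseteq> {0..<n}" using assms by auto
    then have sub: "\<beta> \<subseteq> {..<n}" by auto
    have "(\<Prod>i<n. (if i \<in> \<beta> then mu (digit3 e i) else 1)) = (\<Prod>i\<in>{..<n} \<inter> \<beta>. mu (digit3 e i))"
      by (simp add: prod.inter_restrict)
    also have "{..<n} \<inter> \<beta> = \<beta>" using sub by auto
    finally show "(\<Prod>i<n. (if i \<in> \<beta> then mu (digit3 e i) else 1))
          = of_int (\<Prod>i\<in>\<beta>. sg (digit3 e i)) * r2 ^ card \<beta>"
      by (simp add: mu_def prod.distrib)
  qed
  then show ?thesis unfolding Lam_def by (rule sum.cong[OF refl])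
qed

lemma exp_one:
  assumes "\<Omega> \<subseteq> Pow {0..<n}"
    and par: "\<And>\<beta>. \<beta> \<in> \<Omega> \<Longrightarrow> k \<le> card \<beta> \<and> even (card \<beta> - k)"
  shows "exp (- \<i> * complex_of_real (2 * pi / sqrt 2 ^ k) * Lam n \<Omega> e) = 1"
proof -
  define M :: int where "M = - (\<Sum>\<beta>\<in>\<Omega>. (\<Prod>i\<in>\<beta>. sg (digit3 e i)) * 2 ^ ((card \<beta> - k) div 2))"
  have tm: "complex_of_real (2 * pi / sqrt 2 ^ k) * (of_int (\<Prod>i\<in>\<beta>. sg (digit3 e i)) * r2 ^ card \<beta>)
        = complex_of_real (2 * pi) * of_int ((\<Prod>i\<in>\<beta>. sg (digit3 e i)) * 2 ^ ((card \<beta> - k) div 2))"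
    if b: "\<beta> \<in> \<Omega>" for \<beta>
  proof -
    obtain j where j: "card \<beta> = k + 2 * j"
      using par[OF b] by (metis evenE le_add_diff_inverse)
    have jj: "(card \<beta> - k) div 2 = j" using j by simp
    have "r2 ^ card \<beta> = complex_of_real (sqrt 2 ^ k * 2 ^ j)"
      unfolding r2_def j by (simp only: of_real_power sqrt2_pow[symmetric])
    then show ?thesis unfolding jj by (simp add: field_simps)
  qed
  have "- \<i> * complex_of_real (2 * pi / sqrt 2 ^ k) * Lam n \<Omega> e
      = - \<i> * (\<Sum>\<beta>\<in>\<Omega>. complex_of_real (2 * pi / sqrt 2 ^ k) * (of_int (\<Prod>i\<in>\<beta>. sg (digit3 e i)) * r2 ^ card \<beta>))"
    by (simp add: Lam_form[OF assms(1)] sum_distrib_left mult.assoc)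
  also have "\<dots> = - \<i> * (\<Sum>\<beta>\<in>\<Omega>. complex_of_real (2 * pi) * of_int ((\<Prod>i\<in>\<beta>. sg (digit3 e i)) * 2 ^ ((card \<beta> - k) div 2)))"
    by (rule arg_cong[where f="\<lambda>x. - \<i> * x"], rule sum.cong[OF refl], rule tm)
  also have "\<dots> = \<i> * complex_of_real (2 * pi * of_int M)"
    by (simp add: M_def sum_distrib_left sum_negf)
  finally have eq: "- \<i> * complex_of_real (2 * pi / sqrt 2 ^ k) * Lam n \<Omega> e = \<i> * complex_of_real (2 * pi * of_int M)" .
  have "cis (2 * pi * of_int M) = 1" by (rule cis_multiple_2pi) simp
  then show ?thesis unfolding eq by (simp add: cis_conv_exp)
qed
theorem theorem3p4:
  fixes n :: nat and \<Omega> :: "nat set set"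
  assumes "\<Omega> \<subseteq> Pow {0..<n}"
    and "{} \<notin> \<Omega>"
    and "\<Omega> \<noteq> {}"
    and "(\<forall>\<beta>\<in>\<Omega>. even (card \<beta>)) \<or> (\<forall>\<beta>\<in>\<Omega>. odd (card \<beta>))"
  shows "transition_matrix (NEPS_P3_adj n \<Omega>) (2 * pi / (sqrt 2) ^ (Min (card ` \<Omega>)))
           = 1\<^sub>m (3 ^ n)"
proof -
  define k where "k = Min (card ` \<Omega>)"
  define z where "z = - \<i> * complex_of_real (2 * pi / sqrt 2 ^ k)"
  have fin: "finite \<Omega>" using assms(1) by (rule finite_subset) simp
  have kin: "k \<in> card ` \<Omega>" unfolding k_def using fin assms(3) by simp
  then obtain \<beta>0 where b0: "\<beta>0 \<in> \<Omega>" "k = card \<beta>0" by blast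
  have par: "k \<le> card \<beta> \<and> even (card \<beta> - k)" if b: "\<beta> \<in> \<Omega>" for \<beta>
  proof
    show "k \<le> card \<beta>" unfolding k_def using fin b by simp
    then show "even (card \<beta> - k)" using assms(4) b b0 by auto
  qed
  have ex1: "exp (z * Lam n \<Omega> e) = 1" for e
    unfolding z_def by (rule exp_one[OF assms(1) par])
  let ?M = "NEPS_P3_adj n \<Omega>"
  show ?thesis
    unfolding k_def[symmetric]
  proof (rule eq_matI)
    show "dim_row (transition_matrix ?M (2 * pi / sqrt 2 ^ k)) = dim_row (1\<^sub>m (3 ^ n))"
      by (simp add: transition_matrix_def dimM)
    show "dim_col (transition_matrix ?M (2 * pi / sqrt 2 ^ k)) = dim_col (1\<^sub>m (3 ^ n))"
      by (simp add: transition_matrix_def dimM)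
    fix x y assume "x < dim_row (1\<^sub>m (3 ^ n))" "y < dim_col (1\<^sub>m (3 ^ n))"
    then have xy: "x < 3^n" "y < 3^n" by simp_all
    define K where "K e = W n e x * W n e y / C n e" for e
    have "transition_matrix ?M (2 * pi / sqrt 2 ^ k) $$ (x, y)
        = (\<Sum>m. (z ^ m / of_nat (fact m)) * S n \<Omega> m x y)"
      using xy by (simp add: transition_matrix_def dimM powM z_def)
    also have "\<dots> = (\<Sum>e<3^n. exp (z * Lam n \<Omega> e) * K e)"
    proof (rule sums_unique[symmetric])
      have "(\<lambda>m. \<Sum>e<3^n. (z * Lam n \<Omega> e) ^ m /\<^sub>R fact m * K e) sums (\<Sum>e<3^n. exp (z * Lam n \<Omega> e) * K e)"
        by (intro sums_sum sums_mult2 exp_converges)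
      moreover have "(\<lambda>m. \<Sum>e<3^n. (z * Lam n \<Omega> e) ^ m /\<^sub>R fact m * K e)
          = (\<lambda>m. (z ^ m / of_nat (fact m)) * S n \<Omega> m x y)"
        by (auto simp: S_def K_def sum_distrib_left scaleR_conv_of_real power_mult_distrib
              divide_inverse mult_ac intro!: sum.cong)
      ultimately show "(\<lambda>m. (z ^ m / of_nat (fact m)) * S n \<Omega> m x y) sums (\<Sum>e<3^n. exp (z * Lam n \<Omega> e) * K e)"
        by simp
    qed
    also have "\<dots> = S n \<Omega> 0 x y" by (simp add: ex1 S_def K_def)
    also have "\<dots> = 1\<^sub>m (3 ^ n) $$ (x, y)" using xy by (simp add: entryI[symmetric])
    finally show "transition_matrix ?M (2 * pi / sqrt 2 ^ k) $$ (x, y) = 1\<^sub>m (3 ^ n) $$ (x, y)" .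
  qed
qed

end
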